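(* The 2D incompressible Euler equations $$\mathbf{u}_t+\mathbf{u}\cdot\nabla\mathbf{u}=-\nabla p,\qquad\nabla\cdot\mathbf{u}=0$$ subject to periodic boundary conditions on $\mathbb{T}^2$ do not possess the finitely many determining modes property in $H$; that is, there is no positive integer $M$ such that for any two solutions $\mathbf{u}_1,\mathbf{u}_2$ (with initial data in $V^3$), $\lim_{t\to\infty}\|P_M(\mathbf{u}_1(t)-\mathbf{u}_2(t))\|_H=0$ implies $\lim_{t\to\infty}\|\mathbf{u}_1(t)-\mathbf{u}_2(t)\|_H=0$.
   Context: $\mathbb{T}^2=[0,2\pi)^2$. Let $\mathcal{V}$ be the set of $\mathbb{R}^2$-valued $2\pi$-periodic trigonometric polynomials $\varphi$ with $\nabla\cdot\varphi=0$ and $\int_{\mathbb{T}^2}\varphi=0$; $H$ is the closure of $\mathcal{V}$ in $L^2$, $V^s$ its closure in the $H^s$ seminorm. $P_M$ is the projection onto the Fourier modes $\mathbf{n}\in\mathbb{Z}^2\setminus\{(0,0)\}$ with $|\mathbf{n}|\le M$. For data in $V^s$, $s\ge3$, the Euler equations are globally well-posed with unique solutions in $C([0,T];V^s)$ and conserve the $H$ norm. *)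

theory Defs
  imports "HOL-Analysis.Analysis"
begin

text \<open>Spatial points of the torus are represented by points of real^2; fields are
  2pi-periodic functions on real^2. Fourier modes are pairs of integers.\<close>

definition torus_box :: "(real^2) set" where
  "torus_box = cbox 0 (\<chi> i. 2 * pi)"

definition periodic2 :: "(real^2 \<Rightarrow> 'b) \<Rightarrow> bool" where
  "periodic2 v \<longleftrightarrow> (\<forall>x. v (x + (\<chi> i. if i = 1 then 2 * pi else 0)) = v x
                       \<and> v (x + (\<chi> i. if i = 2 then 2 * pi else 0)) = v x)"

definition mode_dot :: "int \<times> int \<Rightarrow> real^2 \<Rightarrow> real" where
  "mode_dot n x = of_int (fst n) * x $ 1 + of_int (snd n) * x $ 2"

definition mode_sq :: "int \<times> int \<Rightarrow> int" where
  "mode_sq n = (fst n)^2 + (snd n)^2"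

text \<open>Fourier coefficient (normalised: v(x) = sum_n fcoef v n e^{i n.x}).\<close>
definition fcoef :: "(real^2 \<Rightarrow> real^2) \<Rightarrow> int \<times> int \<Rightarrow> complex^2" where
  "fcoef v n = (\<chi> j. integral torus_box
       (\<lambda>x. complex_of_real (v x $ j) * cis (- mode_dot n x)) / complex_of_real (4 * pi^2))"

definition normH :: "(real^2 \<Rightarrow> real^2) \<Rightarrow> real" where
  "normH v = sqrt (integral torus_box (\<lambda>x. (norm (v x))^2))"

definition PM :: "nat \<Rightarrow> (real^2 \<Rightarrow> real^2) \<Rightarrow> (real^2 \<Rightarrow> real^2)" where
  "PM M v = (\<lambda>x. \<chi> j. Re (\<Sum>n\<in>{n. 0 < mode_sq n \<and> real_of_int (mode_sq n) \<le> (real M)^2}.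
                          fcoef v n $ j * cis (mode_dot n x)))"

definition H3_weight :: "(real^2 \<Rightarrow> real^2) \<Rightarrow> int \<times> int \<Rightarrow> real" where
  "H3_weight v n = (real_of_int (mode_sq n))^3 * (norm (fcoef v n))^2"

definition normH3 :: "(real^2 \<Rightarrow> real^2) \<Rightarrow> real" where
  "normH3 v = sqrt (infsum (H3_weight v) UNIV)"

text \<open>Membership in V^3: periodic, square-integrable over the cell, zero mean,
  divergence free, finite H^3 seminorm (Fourier characterisation of the closure).\<close>
definition inV3 :: "(real^2 \<Rightarrow> real^2) \<Rightarrow> bool" where
  "inV3 v \<longleftrightarrow> periodic2 v
     \<and> v integrable_on torus_box
     \<and> (\<lambda>x. (norm (v x))^2) integrable_on torus_box
     \<and> fcoef v (0, 0) = 0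
     \<and> (\<forall>n. of_int (fst n) * fcoef v n $ 1 + of_int (snd n) * fcoef v n $ 2 = 0)
     \<and> H3_weight v summable_on UNIV"

text \<open>A (classical) solution of the 2D periodic incompressible Euler equations on
  [0,\<infinity>) lying in C([0,\<infinity>); V^3).  u t x is the velocity at time t and point x.\<close>
definition euler_solution :: "(real \<Rightarrow> real^2 \<Rightarrow> real^2) \<Rightarrow> bool" where
  "euler_solution u \<longleftrightarrow>
     (\<forall>t\<ge>0. inV3 (u t))
   \<and> (\<forall>t\<ge>0. ((\<lambda>s. normH3 (\<lambda>x. u s x - u t x)) \<longlongrightarrow> 0) (at t within {0..}))
   \<and> (\<exists>p :: real \<Rightarrow> real^2 \<Rightarrow> real.
        (\<forall>t\<ge>0. periodic2 (p t)) \<and>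
        (\<forall>t\<ge>0. \<forall>x. \<exists>Du Dp ut.
            (u t has_derivative Du) (at x)
          \<and> (p t has_derivative Dp) (at x)
          \<and> ((\<lambda>s. u s x) has_vector_derivative ut) (at t within {0..})
          \<and> (\<Sum>i\<in>UNIV. Du (axis i 1) $ i) = 0
          \<and> ut + Du (u t x) = - (\<chi> i. Dp (axis i 1))))"

end

theory Submission imports Defs begin

lemma has_integral_prod2:
  fixes A B :: "real \<Rightarrow> complex"
  assumes cA: "continuous_on UNIV A" and cB: "continuous_on UNIV B"
    and iA: "(A has_integral a) {0..2*pi}" and iB: "(B has_integral b) {0..2*pi}"
  shows "((\<lambda>x. A (x$1) * B (x$2)) has_integral (a*b)) torus_box"
proof -
  define F where "F p = A (fst p) * B (snd p)" for p :: "real \<times> real"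
  have cF: "continuous_on UNIV F" unfolding F_def
    by (intro continuous_intros continuous_on_compose2[OF cA] continuous_on_compose2[OF cB]) auto
  let ?C = "cbox ((0::real),(0::real)) (2*pi, 2*pi)"
  have "integral ?C F = integral (cbox 0 (2*pi)) (\<lambda>s. integral (cbox 0 (2*pi)) (\<lambda>t. F (s, t)))"
    by (rule integral_prod_continuous) (use cF continuous_on_subset in blast)
  also have "\<dots> = integral {0..2*pi} (\<lambda>s. A s * b)"
    using integral_unique[OF has_integral_mult_right[OF iB]] by (simp add: F_def box_real)
  also have "\<dots> = a * b"
    using integral_unique[OF has_integral_mult_left[OF iA]] by simp
  finally have IF: "(F has_integral a * b) ?C"
    using integrable_continuous[OF continuous_on_subset[OF cF]] by (metis has_integral_integral subset_UNIV)
  define g where "g x = (x$1, x$2)" for x :: "real^2"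
  define h where "h p = ((\<chi> i. if i = 1 then fst p else snd p) :: real^2)" for p :: "real \<times> real"
  have hg: "h (g x) = x" for x
    by (simp add: h_def g_def vec_eq_iff forall_2)
  have gh: "g (h p) = p" for p
    by (simp add: h_def g_def)
  have gimg: "g ` cbox u v = cbox (u$1, u$2) (v$1, v$2)" for u v
  proof
    show "g ` cbox u v \<subseteq> cbox (u$1, u$2) (v$1, v$2)"
      by (auto simp: g_def mem_box_cart box_real)
    show "cbox (u$1, u$2) (v$1, v$2) \<subseteq> g ` cbox u v"
    proof
      fix p assume p: "p \<in> cbox (u$1, u$2) (v$1, v$2)"
      obtain s t where [simp]: "p = (s,t)" by fastforce
      have "h p \<in> cbox u v" using p
        by (auto simp: h_def mem_box_cart box_real forall_2)
      then show "p \<in> g ` cbox u v" using gh[of p] by (metis image_eqI)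
    qed
  qed
  have himg: "h ` cbox u v = cbox (\<chi> i. if i = 1 then fst u else snd u) (\<chi> i. if i = 1 then fst v else snd v)" for u v
  proof
    obtain u1 u2 v1 v2 where [simp]: "u = (u1,u2)" "v = (v1,v2)" by fastforce
    show "h ` cbox u v \<subseteq> cbox (\<chi> i. if i = 1 then fst u else snd u) (\<chi> i. if i = 1 then fst v else snd v)"
      by (auto simp: h_def mem_box_cart box_real forall_2)
    show "cbox (\<chi> i. if i = 1 then fst u else snd u) (\<chi> i. if i = 1 then fst v else snd v) \<subseteq> h ` cbox u v"
    proof
      fix x :: "real^2" assume x: "x \<in> cbox (\<chi> i. if i = 1 then fst u else snd u) (\<chi> i. if i = 1 then fst v else snd v)"
      have "g x \<in> cbox u v" using x
        by (auto simp: g_def mem_box_cart box_real forall_2)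
      then show "x \<in> h ` cbox u v" using hg[of x] by (metis image_eqI)
    qed
  qed
  have cont: "Henstock_Kurzweil_Integration.content (g ` cbox u v) = 1 * Henstock_Kurzweil_Integration.content (cbox u v)" for u v
  proof (cases "cbox u v = {}")
    case True then show ?thesis by simp
  next
    case False
    then have le: "u$i \<le> v$i" for i by (meson interval_ne_empty_cart(1) not_le)
    show ?thesis unfolding gimg content_Pair using False le[of 1] le[of 2]
      by (simp add: content_cbox_cart UNIV_2 box_real)
  qed
  have contg: "continuous (at x) g" for x
    unfolding g_def by (intro continuous_intros)
  have "((\<lambda>x. F (g x)) has_integral (1/1) *\<^sub>R (a*b)) (h ` ?C)"
    by (rule has_integral_twiddle[OF _ hg gh contg _ _ cont IF]) (use gimg himg in auto)
  moreover have "h ` ?C = torus_box"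
    unfolding himg torus_box_def by (rule arg_cong2[where f=cbox]) (simp_all add: vec_eq_iff)
  ultimately show ?thesis by (simp add: F_def g_def)
qed

lemma int_cis:
  fixes m :: int assumes "m \<noteq> 0"
  shows "((\<lambda>t. cis (of_int m * t)) has_integral 0) {0..2*pi}"
proof -
  define F where "F t = cis (of_int m * t) / (\<i> * of_int m)" for t
  have d: "(F has_vector_derivative cis (of_int m * t)) (at t within {0..2*pi})" for t
    unfolding F_def has_vector_derivative_def
    apply (rule derivative_eq_intros refl | simp)+
    using assms by (auto simp: fun_eq_iff field_simps scaleR_conv_of_real)
  have "((\<lambda>t. cis (of_int m * t)) has_integral (F (2*pi) - F 0)) {0..2*pi}"
    by (rule fundamental_theorem_of_calculus) (use d in auto)
  moreover have "F (2*pi) = F 0"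
  proof -
    have "cis (of_int m * (2*pi)) = 1"
      using cos_int_2pin[of m] sin_int_2pin[of m] by (simp add: cis.ctr complex_eq_iff mult.commute)
    then show ?thesis by (simp add: F_def)
  qed
  ultimately show ?thesis by simp
qed

lemma sin_cis: "complex_of_real (sin y) = (cis y - cis (- y)) / (2 * \<i>)"
proof -
  have "cis y - cis (- y) = 2 * \<i> * complex_of_real (sin y)" by (simp add: complex_eq_iff)
  then show ?thesis by simp
qed

definition wk :: "int \<Rightarrow> real^2 \<Rightarrow> real^2" where
  "wk k x = sin (of_int k * x$2) *\<^sub>R axis 1 1"

lemma wk_nth1 [simp]: "wk k x $ 1 = sin (of_int k * x$2)"
  by (simp add: wk_def)
lemma wk_nth2 [simp]: "wk k x $ 2 = 0"
  by (simp add: wk_def axis_def)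

lemma cont_wk: "continuous_on S (wk k)"
  unfolding wk_def by (intro continuous_intros continuous_on_compose2[OF continuous_on_id]) 

lemma has_integral_cis_int:
  fixes m :: int
  shows "((\<lambda>t. cis (of_int m * t)) has_integral (if m = 0 then 2*pi else 0)) {0..2*pi}"
proof (cases "m = 0")
  case True
  then show ?thesis using has_integral_const_real[of "1::complex" 0 "2*pi"] by (simp add: scaleR_conv_of_real)
qed (simp add: int_cis)

lemma fcoef_wk2: "fcoef (wk k) n $ 2 = 0"
  by (simp add: fcoef_def)

lemma fcoef_wk1:
  assumes "n \<noteq> (0, k)" "n \<noteq> (0, -k)"
  shows "fcoef (wk k) n $ 1 = 0"
proof -
  obtain n1 n2 where n: "n = (n1, n2)" by fastforce
  define A where "A s = cis (of_int (- n1) * s)" for s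
  define B where "B t = complex_of_real (sin (of_int k * t)) * cis (of_int (- n2) * t)" for t
  have cA: "continuous_on UNIV A" unfolding A_def by (intro continuous_intros)
  have cB: "continuous_on UNIV B" unfolding B_def by (intro continuous_intros)
  have eq: "complex_of_real (sin (of_int k * x$2)) * cis (- mode_dot n x) = A (x$1) * B (x$2)" for x
    by (simp add: A_def B_def n mode_dot_def cis_mult algebra_simps)
  have iA: "(A has_integral (if n1 = 0 then 2*pi else 0)) {0..2*pi}"
    unfolding A_def using has_integral_cis_int[of "- n1"] by simp
  have Beq: "B t = (cis (of_int (k - n2) * t) - cis (of_int (- k - n2) * t)) / (2 * \<i>)" for t
    by (simp add: B_def sin_cis cis_mult algebra_simps diff_divide_distrib)
  have iB: "(B has_integral integral {0..2*pi} B) {0..2*pi}"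
    using cB by (intro integrable_integral integrable_continuous_interval continuous_on_subset[OF cB]) auto
  have "integral torus_box (\<lambda>x. A (x$1) * B (x$2)) = 0"
  proof (cases "n1 = 0")
    case False
    have "((\<lambda>x. A (x$1) * B (x$2)) has_integral (0 * integral {0..2*pi} B)) torus_box"
      by (rule has_integral_prod2[OF cA cB _ iB]) (use iA False in simp)
    then show ?thesis by (simp add: integral_unique)
  next
    case True
    with assms n have "k - n2 \<noteq> 0" "- k - n2 \<noteq> 0" by auto
    then have "((\<lambda>t. (cis (of_int (k - n2) * t) - cis (of_int (- k - n2) * t)) / (2 * \<i>)) has_integral (0 - 0) / (2 * \<i>)) {0..2*pi}"
      by (intro has_integral_divide has_integral_diff int_cis)
    moreover have Bfun: "B = (\<lambda>t. (cis (of_int (k - n2) * t) - cis (of_int (- k - n2) * t)) / (2 * \<i>))"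
      by (intro ext Beq)
    ultimately have "(B has_integral ((0-0)/(2*\<i>))) {0..2*pi}" by (simp only: Bfun)
    then have iB0: "(B has_integral 0) {0..2*pi}" by simp
    have "((\<lambda>x. A (x$1) * B (x$2)) has_integral (complex_of_real (if n1 = 0 then 2*pi else 0) * 0)) torus_box"
      by (rule has_integral_prod2[OF cA cB iA iB0])
    then show ?thesis by (simp add: integral_unique)
  qed
  then show ?thesis by (simp add: fcoef_def eq)
qed

lemma fcoef_zero [simp]: "fcoef (\<lambda>x. 0) n = 0"
  by (simp add: fcoef_def vec_eq_iff)

lemma H3_weight_zero [simp]: "H3_weight (\<lambda>x. 0) = (\<lambda>n. 0)"
  by (simp add: fun_eq_iff H3_weight_def)

lemma normH3_zero [simp]: "normH3 (\<lambda>x. 0) = 0"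
  by (simp add: normH3_def)

lemma stationary:
  assumes "inV3 w"
    and D: "\<And>x. \<exists>Du. (w has_derivative Du) (at x) \<and> (\<Sum>i\<in>UNIV. Du (axis i 1) $ i) = 0 \<and> Du (w x) = 0"
  shows "euler_solution (\<lambda>t. w)"
  unfolding euler_solution_def
proof (intro conjI)
  show "\<forall>t\<ge>0. inV3 w" using assms by simp
  show "\<forall>t\<ge>0. ((\<lambda>s. normH3 (\<lambda>x. w x - w x)) \<longlongrightarrow> 0) (at t within {0..})" by simp
  show "\<exists>p :: real \<Rightarrow> real^2 \<Rightarrow> real. (\<forall>t\<ge>0. periodic2 (p t)) \<and>
        (\<forall>t\<ge>0. \<forall>x. \<exists>Du Dp ut.
            (w has_derivative Du) (at x)
          \<and> (p t has_derivative Dp) (at x)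
          \<and> ((\<lambda>s. w x) has_vector_derivative ut) (at t within {0..})
          \<and> (\<Sum>i\<in>UNIV. Du (axis i 1) $ i) = 0
          \<and> ut + Du (w x) = - (\<chi> i. Dp (axis i 1)))"
  proof (intro exI[of _ "\<lambda>t x. 0"] conjI allI impI)
    show "periodic2 (\<lambda>x. 0::real)" for t by (simp add: periodic2_def)
    fix t :: real and x :: "real^2"
    obtain Du where Du: "(w has_derivative Du) (at x)" "(\<Sum>i\<in>UNIV. Du (axis i 1) $ i) = 0" "Du (w x) = 0"
      using D by blast
    show "\<exists>Du Dp ut. (w has_derivative Du) (at x)
          \<and> ((\<lambda>x. 0::real) has_derivative Dp) (at x)
          \<and> ((\<lambda>s. w x) has_vector_derivative ut) (at t within {0..})
          \<and> (\<Sum>i\<in>UNIV. Du (axis i 1) $ i) = 0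
          \<and> ut + Du (w x) = - (\<chi> i. Dp (axis i 1))"
      by (intro exI[of _ Du] exI[of _ "\<lambda>h. 0"] exI[of _ 0] conjI Du has_derivative_const has_vector_derivative_const)
         (simp add: Du vec_eq_iff)
  qed
qed

lemma inV3_zero: "inV3 (\<lambda>x. 0)"
  by (simp add: inV3_def periodic2_def integrable_0)

lemma euler_zero: "euler_solution (\<lambda>t x. 0)"
  by (rule stationary[OF inV3_zero]) (auto intro!: exI[of _ "\<lambda>h. 0"])

lemma H3_weight_wk_supp: "n \<notin> {(0,k),(0,-k)} \<Longrightarrow> H3_weight (wk k) n = 0"
proof -
  assume "n \<notin> {(0,k),(0,-k)}"
  then have "fcoef (wk k) n = 0" using fcoef_wk1 fcoef_wk2 by (auto simp: vec_eq_iff forall_2)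
  then show ?thesis by (simp add: H3_weight_def)
qed

lemma sin_per: "sin (of_int k * (y + 2*pi)) = sin (of_int k * y)"
proof -
  have "of_int k * (y + 2*pi) = of_int k * y + (2*pi) * of_int k" by (simp add: algebra_simps)
  then show ?thesis by (simp add: sin_add)
qed

lemma inV3_wk:
  assumes "k \<noteq> 0"
  shows "inV3 (wk k)"
  unfolding inV3_def
proof (intro conjI allI)
  show "periodic2 (wk k)"
    by (simp add: periodic2_def wk_def sin_per)
  show "wk k integrable_on torus_box"
    unfolding torus_box_def by (rule integrable_continuous[OF cont_wk])
  show "(\<lambda>x. (norm (wk k x))^2) integrable_on torus_box"
    unfolding torus_box_def by (rule integrable_continuous) (intro continuous_intros cont_wk)
  show "fcoef (wk k) (0, 0) = 0"
    using fcoef_wk1[of "(0,0)" k] fcoef_wk2 assms by (auto simp: vec_eq_iff forall_2)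
  fix n :: "int \<times> int"
  show "of_int (fst n) * fcoef (wk k) n $ 1 + of_int (snd n) * fcoef (wk k) n $ 2 = 0"
  proof (cases "fst n = 0")
    case False
    then have "n \<noteq> (0,k)" "n \<noteq> (0,-k)" by auto
    then show ?thesis using fcoef_wk1[of n k] fcoef_wk2 by simp
  qed (simp add: fcoef_wk2)
next
  show "H3_weight (wk k) summable_on UNIV"
    using summable_on_cong_neutral[of "{(0,k),(0,-k)}" UNIV "H3_weight (wk k)" "H3_weight (wk k)"]
      H3_weight_wk_supp by auto
qed

lemma euler_wk:
  assumes "k \<noteq> 0"
  shows "euler_solution (\<lambda>t. wk k)"
proof (rule stationary[OF inV3_wk[OF assms]])
  fix x :: "real^2"
  define Du where "Du h = ((cos (of_int k * x$2) * (of_int k * h$2)) *\<^sub>R axis 1 (1::real) :: real^2)" for h :: "real^2"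
  have "(wk k has_derivative Du) (at x)"
    unfolding wk_def[abs_def] Du_def
    by (rule derivative_eq_intros bounded_linear_imp_has_derivative[OF bounded_linear_vec_nth] refl)+
       (simp add: fun_eq_iff)
  moreover have "(\<Sum>i\<in>UNIV. Du (axis i 1) $ i) = 0"
    by (simp add: sum_2 Du_def axis_def)
  moreover have "Du (wk k x) = 0"
    by (simp add: Du_def)
  ultimately show "\<exists>Du. (wk k has_derivative Du) (at x) \<and> (\<Sum>i\<in>UNIV. Du (axis i 1) $ i) = 0 \<and> Du (wk k x) = 0"
    by blast
qed


lemma PM_wk:
  assumes "int M < k"
  shows "PM M (wk k) = (\<lambda>x. 0)"
proof -
  have "fcoef (wk k) n = 0" if "real_of_int (mode_sq n) \<le> (real M)^2" for n
  proof -
    have "n \<noteq> (0,k) \<and> n \<noteq> (0,-k)"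
    proof (rule ccontr)
      assume "\<not> ?thesis"
      then have "mode_sq n = k^2" by (auto simp: mode_sq_def)
      then have "real_of_int (k^2) \<le> (real M)^2" using that by simp
      then have "k^2 \<le> (int M)^2" by (metis of_int_le_iff of_int_of_nat_eq of_int_power)
      moreover have "(int M)^2 < k^2" using assms by (intro power_strict_mono) auto
      ultimately show False by simp
    qed
    then show ?thesis using fcoef_wk1 fcoef_wk2 by (auto simp: vec_eq_iff forall_2)
  qed
  then show ?thesis
    unfolding PM_def by (intro ext) (simp add: vec_eq_iff)
qed

lemma normH_wk_pos:
  assumes "k > 0"
  shows "normH (wk k) \<noteq> 0"
proof
  assume "normH (wk k) = 0"
  then have I: "integral torus_box (\<lambda>x. (norm (wk k x))^2) = 0"
    unfolding normH_def by simp
  define x0 :: "real^2" where "x0 = (\<chi> i. if i = 1 then 0 else pi / (2 * of_int k))"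
  have "(\<lambda>x. (norm (wk k x))^2) x0 = 0"
  proof (rule has_integral_0_cbox_imp_0[where f="\<lambda>x. (norm (wk k x))^2" and a=0 and b="\<chi> i. 2 * pi"])
    show "continuous_on (cbox 0 (\<chi> i. 2 * pi)) (\<lambda>x. (norm (wk k x))^2)"
      by (intro continuous_intros cont_wk)
    show "((\<lambda>x. (norm (wk k x))^2) has_integral 0) (cbox 0 (\<chi> i. 2 * pi))"
      using I integrable_continuous[of 0 "\<chi> i. 2 * pi" "\<lambda>x. (norm (wk k x))^2"]
      by (metis \<open>continuous_on _ _\<close> has_integral_integral torus_box_def)
    show "box 0 ((\<chi> i. 2 * pi) :: real^2) \<noteq> {}"
      using pi_gt_zero by (simp add: interval_eq_empty_cart(1) not_le)
    have "pi / (2 * of_int k) \<le> 2 * pi"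
    proof -
      have "pi / (2 * of_int k) \<le> pi / 2" using assms
        by (intro divide_left_mono) auto
      then show ?thesis using pi_gt_zero by linarith
    qed
    then show "x0 \<in> cbox 0 (\<chi> i. 2 * pi)" using assms
      by (auto simp: x0_def mem_box_cart)
  qed (simp)
  moreover have "of_int k * (pi / (2 * of_int k)) = pi / 2" using assms by simp
  ultimately show False using assms by (simp add: wk_def x0_def)
qed

theorem theorem4p4:
  shows "\<not> (\<exists>M::nat. M > 0 \<and>
           (\<forall>u1 u2. euler_solution u1 \<and> euler_solution u2 \<and>
              ((\<lambda>t. normH (PM M (\<lambda>x. u1 t x - u2 t x))) \<longlongrightarrow> 0) at_top
              \<longrightarrow> ((\<lambda>t. normH (\<lambda>x. u1 t x - u2 t x)) \<longlongrightarrow> 0) at_top))"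
proof
  assume "\<exists>M::nat. M > 0 \<and>
           (\<forall>u1 u2. euler_solution u1 \<and> euler_solution u2 \<and>
              ((\<lambda>t. normH (PM M (\<lambda>x. u1 t x - u2 t x))) \<longlongrightarrow> 0) at_top
              \<longrightarrow> ((\<lambda>t. normH (\<lambda>x. u1 t x - u2 t x)) \<longlongrightarrow> 0) at_top)"
  then obtain M :: nat where P: "\<forall>u1 u2. euler_solution u1 \<and> euler_solution u2 \<and>
              ((\<lambda>t. normH (PM M (\<lambda>x. u1 t x - u2 t x))) \<longlongrightarrow> 0) at_top
              \<longrightarrow> ((\<lambda>t. normH (\<lambda>x. u1 t x - u2 t x)) \<longlongrightarrow> 0) at_top" by blast
  define k where "k = int M + 1"
  have k: "k > 0" "int M < k" by (auto simp: k_def)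
  have "((\<lambda>t::real. normH (PM M (\<lambda>x. wk k x - 0))) \<longlongrightarrow> 0) at_top"
    using PM_wk[OF k(2)] by (simp add: normH_def)
  then have "((\<lambda>t::real. normH (\<lambda>x. wk k x - 0)) \<longlongrightarrow> 0) at_top"
    using P[rule_format, of "\<lambda>t. wk k" "\<lambda>t x. 0"] euler_wk euler_zero k by auto
  then have "normH (wk k) = 0"
    by (simp add: tendsto_const_iff)
  with normH_wk_pos[OF k(1)] show False by simp
qed

end
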